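(* Let $G$ be a finite group and let $n$ be a positive integer. If $\mathrm{VPA}_n(G)\ne\emptyset$ then every prime divisor of $n$ divides $|G|$.
   Context: For a positive integer $k$, $\zeta_k$ denotes a complex primitive $k$-th root of unity; $\mathrm{Tr}_{F/K}$ is the trace map. $\sum_{x^G}$ denotes a sum over representatives of the conjugacy classes of $G$. Brauer characters modulo a prime $p$ are taken w.r.t. a sufficiently large $p$-modular system. $\mathrm{VPA}_n(G)$ is the set of lists $\varepsilon=(\varepsilon_d)_{d\mid n}$ of integer-valued class functions of $G$, indexed by the positive divisors of $n$, such that: (V1) $\sum_{x^G}\varepsilon_d(x)=1$ for each $d$; (V2) $\varepsilon_d(1)=0$ if $d\ne n$; (V3) $\varepsilon_d(x)=0$ if $|x|$ does not divide $n/d$; (V4) for every ordinary character $\chi$ of $G$ or Brauer character $\chi$ of $G$ modulo a prime not dividing $n$, and every $l\in\mathbb{Z}$, $\frac{1}{n}\sum_{x^G}\sum_{d\mid n}\varepsilon_d(x)\mathrm{Tr}_{\mathbb{Q}(\zeta_n^d)/\mathbb{Q}}(\chi(x)\zeta_n^{-ld})$ is a non-negative integer. *)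

theory Defs
  imports "HOL-Algebra.Algebra" "Jordan_Normal_Form.Matrix" "HOL-Computational_Algebra.Polynomial"
begin

definition conj_class :: "('a, 'b) monoid_scheme \<Rightarrow> 'a \<Rightarrow> 'a set" where
  "conj_class G x = {g \<otimes>\<^bsub>G\<^esub> x \<otimes>\<^bsub>G\<^esub> inv\<^bsub>G\<^esub> g | g. g \<in> carrier G}"

definition conj_classes :: "('a, 'b) monoid_scheme \<Rightarrow> 'a set set" where
  "conj_classes G = conj_class G ` carrier G"

definition sum_classes :: "('a, 'b) monoid_scheme \<Rightarrow> ('a \<Rightarrow> 'c::comm_monoid_add) \<Rightarrow> 'c" where
  "sum_classes G f = (\<Sum>C\<in>conj_classes G. f (SOME x. x \<in> C))"

definition class_function :: "('a, 'b) monoid_scheme \<Rightarrow> ('a \<Rightarrow> 'c) \<Rightarrow> bool" where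
  "class_function G f \<longleftrightarrow>
     (\<forall>x\<in>carrier G. \<forall>g\<in>carrier G. f (g \<otimes>\<^bsub>G\<^esub> x \<otimes>\<^bsub>G\<^esub> inv\<^bsub>G\<^esub> g) = f x)"

definition mat_trace :: "complex mat \<Rightarrow> complex" where
  "mat_trace A = (\<Sum>i<dim_row A. A $$ (i, i))"

definition ordinary_character :: "('a, 'b) monoid_scheme \<Rightarrow> ('a \<Rightarrow> complex) \<Rightarrow> bool" where
  "ordinary_character G \<chi> \<longleftrightarrow>
     (\<exists>(m::nat) (\<rho>::'a \<Rightarrow> complex mat).
        (\<forall>x\<in>carrier G. \<rho> x \<in> carrier_mat m m) \<and>
        \<rho> \<one>\<^bsub>G\<^esub> = 1\<^sub>m m \<and>
        (\<forall>x\<in>carrier G. \<forall>y\<in>carrier G. \<rho> (x \<otimes>\<^bsub>G\<^esub> y) = \<rho> x * \<rho> y) \<and>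
        (\<forall>x\<in>carrier G. \<chi> x = mat_trace (\<rho> x)))"

definition fmat_carrier :: "('k, 'c) ring_scheme \<Rightarrow> nat \<Rightarrow> (nat \<Rightarrow> nat \<Rightarrow> 'k) set" where
  "fmat_carrier F m = {A. \<forall>i j. (i < m \<and> j < m \<longrightarrow> A i j \<in> carrier F) \<and>
                                  (\<not> (i < m \<and> j < m) \<longrightarrow> A i j = \<zero>\<^bsub>F\<^esub>)}"

definition fmat_mult :: "('k, 'c) ring_scheme \<Rightarrow> nat \<Rightarrow> (nat \<Rightarrow> nat \<Rightarrow> 'k) \<Rightarrow> (nat \<Rightarrow> nat \<Rightarrow> 'k) \<Rightarrow> (nat \<Rightarrow> nat \<Rightarrow> 'k)" where
  "fmat_mult F m A B = (\<lambda>i j. if i < m \<and> j < m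
       then (\<Oplus>\<^bsub>F\<^esub> k\<in>{..<m}. A i k \<otimes>\<^bsub>F\<^esub> B k j) else \<zero>\<^bsub>F\<^esub>)"

definition fmat_diag :: "('k, 'c) ring_scheme \<Rightarrow> nat \<Rightarrow> (nat \<Rightarrow> 'k) \<Rightarrow> (nat \<Rightarrow> nat \<Rightarrow> 'k)" where
  "fmat_diag F m d = (\<lambda>i j. if i < m \<and> j < m \<and> i = j then d i else \<zero>\<^bsub>F\<^esub>)"

definition fmat_one :: "('k, 'c) ring_scheme \<Rightarrow> nat \<Rightarrow> (nat \<Rightarrow> nat \<Rightarrow> 'k)" where
  "fmat_one F m = fmat_diag F m (\<lambda>_. \<one>\<^bsub>F\<^esub>)"

definition pprime_roots :: "nat \<Rightarrow> ('k, 'c) ring_scheme \<Rightarrow> 'k set" where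
  "pprime_roots p F = {u \<in> carrier F. \<exists>k::nat. k > 0 \<and> coprime k p \<and> u [^]\<^bsub>F\<^esub> k = \<one>\<^bsub>F\<^esub>}"

text \<open>The data of a (sufficiently large) \<open>p\<close>-modular system relevant for Brauer characters:
  an algebraically closed residue field \<open>F\<close> of characteristic \<open>p\<close> together with the
  lifting \<open>\<lambda>\<close> of \<open>p'\<close>-roots of unity of \<open>F\<close> to complex roots of unity (an injective
  multiplicative map).\<close>
definition modular_system :: "nat \<Rightarrow> ('k, 'c) ring_scheme \<Rightarrow> ('k \<Rightarrow> complex) \<Rightarrow> bool" where
  "modular_system p F lft \<longleftrightarrow>
     Factorial_Ring.prime p \<and> algebraically_closed F \<and> add_pow F p \<one>\<^bsub>F\<^esub> = \<zero>\<^bsub>F\<^esub> \<and>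
     inj_on lft (pprime_roots p F) \<and>
     (\<forall>u\<in>pprime_roots p F. \<forall>v\<in>pprime_roots p F. lft (u \<otimes>\<^bsub>F\<^esub> v) = lft u * lft v)"

text \<open>Brauer characters of \<open>G\<close> modulo \<open>p\<close> w.r.t. the modular system \<open>(F, \<lambda>)\<close>:
  for a representation \<open>\<rho>\<close> of \<open>G\<close> over \<open>F\<close> and a \<open>p\<close>-regular element \<open>x\<close>, \<open>\<rho> x\<close> is
  diagonalisable; the value at \<open>x\<close> is the sum of the lifts of its eigenvalues
  (with multiplicity).  Values at \<open>p\<close>-singular elements are not constrained.\<close>
definition brauer_character ::
  "('a, 'b) monoid_scheme \<Rightarrow> nat \<Rightarrow> ('k, 'c) ring_scheme \<Rightarrow> ('k \<Rightarrow> complex) \<Rightarrow> ('a \<Rightarrow> complex) \<Rightarrow> bool" where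
  "brauer_character G p F lft \<chi> \<longleftrightarrow>
     (\<exists>(m::nat) (\<rho>::'a \<Rightarrow> nat \<Rightarrow> nat \<Rightarrow> 'k).
        (\<forall>x\<in>carrier G. \<rho> x \<in> fmat_carrier F m) \<and>
        \<rho> \<one>\<^bsub>G\<^esub> = fmat_one F m \<and>
        (\<forall>x\<in>carrier G. \<forall>y\<in>carrier G. \<rho> (x \<otimes>\<^bsub>G\<^esub> y) = fmat_mult F m (\<rho> x) (\<rho> y)) \<and>
        (\<forall>x\<in>carrier G. coprime (group.ord G x) p \<longrightarrow>
           (\<exists>P Q d. P \<in> fmat_carrier F m \<and> Q \<in> fmat_carrier F m \<and>
              fmat_mult F m P Q = fmat_one F m \<and>
              (\<forall>i<m. d i \<in> carrier F) \<and>
              fmat_mult F m (fmat_mult F m P (\<rho> x)) Q = fmat_diag F m d \<and>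
              \<chi> x = (\<Sum>i<m. lft (d i)))))"

definition zeta :: "nat \<Rightarrow> complex" where
  "zeta k = exp (2 * pi * \<i> / of_nat k)"

text \<open>For a primitive \<open>m\<close>-th root of unity \<open>z\<close>, the trace \<open>Tr_{\<Q>(z)/\<Q>}\<close> of
  \<open>\<alpha> = f(z) \<in> \<Q>(z)\<close> (\<open>f\<close> a rational polynomial) is \<open>\<Sum>\<^sub>\<sigma> \<sigma>(\<alpha>) = \<Sum>_{k coprime to m} f(z^k)\<close>,
  the Galois group of \<open>\<Q>(z)/\<Q>\<close> consisting of the maps \<open>z \<mapsto> z^k\<close>.\<close>
definition cyc_trace :: "nat \<Rightarrow> complex \<Rightarrow> complex \<Rightarrow> complex" where
  "cyc_trace m z \<alpha> =
     (let f = (SOME f :: rat poly. poly (map_poly of_rat f) z = \<alpha>)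
      in \<Sum>k\<in>{k. k < m \<and> coprime k m}. poly (map_poly of_rat f) (z ^ k))"

text \<open>\<open>\<epsilon> d\<close> is the class function \<open>\<epsilon>_d\<close>, for positive divisors \<open>d\<close> of \<open>n\<close>;
  \<open>F p\<close>, \<open>\<lambda> p\<close> the fixed \<open>p\<close>-modular system for each prime \<open>p\<close>.\<close>
definition VPA ::
  "nat \<Rightarrow> ('a, 'b) monoid_scheme \<Rightarrow> (nat \<Rightarrow> ('k, 'c) ring_scheme) \<Rightarrow> (nat \<Rightarrow> 'k \<Rightarrow> complex)
     \<Rightarrow> (nat \<Rightarrow> 'a \<Rightarrow> int) set" where
  "VPA n G F lft = {\<epsilon>.
     (\<forall>d. d dvd n \<longrightarrow> class_function G (\<epsilon> d)) \<and>
     (\<forall>d. d dvd n \<longrightarrow> sum_classes G (\<epsilon> d) = 1) \<and>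
     (\<forall>d. d dvd n \<longrightarrow> d \<noteq> n \<longrightarrow> \<epsilon> d \<one>\<^bsub>G\<^esub> = 0) \<and>
     (\<forall>d. d dvd n \<longrightarrow> (\<forall>x\<in>carrier G. \<not> group.ord G x dvd (n div d) \<longrightarrow> \<epsilon> d x = 0)) \<and>
     (\<forall>\<chi>. (ordinary_character G \<chi> \<or>
           (\<exists>p. Factorial_Ring.prime p \<and> \<not> p dvd n \<and> brauer_character G p (F p) (lft p) \<chi>)) \<longrightarrow>
        (\<forall>l::int. \<exists>k::nat.
           (1 / of_nat n) * sum_classes G (\<lambda>x. \<Sum>d | d dvd n.
               of_int (\<epsilon> d x) * cyc_trace (n div d) (zeta n ^ d)
                                    (\<chi> x * zeta n powi (- (l * int d))))
           = of_nat k))}"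

end

theory Submission
  imports Defs "HOL-Algebra.Multiplicative_Group"
begin

lemma sum_classes_single:
  fixes G :: "('a, 'b) monoid_scheme" (structure) and h :: "'a \<Rightarrow> 'c::comm_monoid_add"
  assumes G: "group G" and fin: "finite (carrier G)"
    and h0: "\<And>x. x \<in> carrier G \<Longrightarrow> x \<noteq> \<one>\<^bsub>G\<^esub> \<Longrightarrow> h x = 0"
  shows "sum_classes G h = h \<one>\<^bsub>G\<^esub>"
proof -
  interpret group G by (rule G)
  have c1: "conj_class G \<one> = {\<one>}"
    unfolding conj_class_def by force
  have c1in: "{\<one>} \<in> conj_classes G"
    unfolding conj_classes_def using c1 by (metis image_eqI one_closed)
  have finC: "finite (conj_classes G)" unfolding conj_classes_def using fin by simp
  have rest: "h (SOME x. x \<in> C) = 0" if C: "C \<in> conj_classes G - {{\<one>}}" for C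
  proof -
    from C obtain y where y: "y \<in> carrier G" "C = conj_class G y"
      unfolding conj_classes_def by auto
    have yC: "y \<in> C" unfolding y conj_class_def
      by (rule CollectI, rule exI[of _ \<one>]) (use y in simp)
    have sC: "(SOME x. x \<in> C) \<in> C" using yC by (rule someI)
    then obtain g where g: "g \<in> carrier G" "(SOME x. x \<in> C) = g \<otimes> y \<otimes> inv g"
      unfolding y conj_class_def by auto
    have car: "(SOME x. x \<in> C) \<in> carrier G" using g y by simp
    have ne: "(SOME x. x \<in> C) \<noteq> \<one>"
    proof
      assume "(SOME x. x \<in> C) = \<one>"
      then have "g \<otimes> y \<otimes> inv g = \<one>" using g by simp
      then have "y = \<one>" using g y
        by (metis inv_closed inv_equality l_cancel_one' m_assoc m_closed r_inv)
      then show False using C y c1 by simp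
    qed
    show ?thesis using h0[OF car ne] .
  qed
  have "sum_classes G h = h (SOME x. x \<in> {\<one>}) + (\<Sum>C\<in>conj_classes G - {{\<one>}}. h (SOME x. x \<in> C))"
    unfolding sum_classes_def using sum.remove[OF finC c1in, of "\<lambda>C. h (SOME x. x \<in> C)"] by simp
  also have "\<dots> = h \<one>" using rest by simp
  finally show ?thesis .
qed

lemma zero_character:
  "ordinary_character G (\<lambda>x. 0)"
  unfolding ordinary_character_def
  by (rule exI[of _ 0], rule exI[of _ "\<lambda>x. 1\<^sub>m 0"]) (auto simp: mat_trace_def)

lemma regular_character:
  fixes G :: "('a, 'b) monoid_scheme" (structure)
  assumes G: "group G" and fin: "finite (carrier G)"
  shows "ordinary_character G (\<lambda>x. if x = \<one> then of_nat (card (carrier G)) else 0)"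
proof -
  interpret group G by (rule G)
  define m where "m = card (carrier G)"
  obtain f where f: "bij_betw f {0..<m} (carrier G)"
    using ex_bij_betw_nat_finite[OF fin] unfolding m_def by blast
  have fin': "\<And>i. i < m \<Longrightarrow> f i \<in> carrier G" using f bij_betwE by fastforce
  have finj: "\<And>i j. i < m \<Longrightarrow> j < m \<Longrightarrow> f i = f j \<longleftrightarrow> i = j"
    using f unfolding bij_betw_def inj_on_def by auto
  have fsurj: "\<And>y. y \<in> carrier G \<Longrightarrow> \<exists>k<m. f k = y"
    using f unfolding bij_betw_def by (metis atLeastLessThan_iff imageE)
  define \<rho> :: "'a \<Rightarrow> complex mat" where
    "\<rho> x = mat m m (\<lambda>(i,j). if f i = x \<otimes> f j then 1 else 0)" for x
  have r1: "\<forall>x\<in>carrier G. \<rho> x \<in> carrier_mat m m" unfolding \<rho>_def by simp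
  have r2: "\<rho> \<one> = 1\<^sub>m m"
    by (rule eq_matI) (auto simp: \<rho>_def fin' finj)
  have r3: "\<rho> (x \<otimes> y) = \<rho> x * \<rho> y" if x: "x \<in> carrier G" and y: "y \<in> carrier G" for x y
  proof (rule eq_matI)
    fix i j assume ij: "i < dim_row (\<rho> x * \<rho> y)" "j < dim_col (\<rho> x * \<rho> y)"
    then have i: "i < m" and j: "j < m" by (auto simp: \<rho>_def)
    obtain k0 where k0: "k0 < m" "f k0 = y \<otimes> f j" using fsurj[of "y \<otimes> f j"] y fin'[OF j] by auto
    have kk: "\<And>k. k<m \<Longrightarrow> f k = y \<otimes> f j \<longleftrightarrow> k = k0" using finj k0 by metis
    have "(\<rho> x * \<rho> y) $$ (i,j) = (\<Sum>k\<in>{0..<m}. (if f i = x \<otimes> f k then 1 else 0) * (if f k = y \<otimes> f j then 1 else (0::complex)))"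
      using i j by (simp add: \<rho>_def scalar_prod_def)
    also have "\<dots> = (\<Sum>k\<in>{0..<m}. if k = k0 then (if f i = x \<otimes> f k0 then 1 else 0) else (0::complex))"
      by (rule sum.cong) (use kk in auto)
    also have "\<dots> = (if f i = x \<otimes> f k0 then 1 else 0)" using k0 by simp
    also have "\<dots> = \<rho> (x \<otimes> y) $$ (i,j)"
      using i j k0 x y fin' by (simp add: \<rho>_def m_assoc)
    finally show "\<rho> (x \<otimes> y) $$ (i, j) = (\<rho> x * \<rho> y) $$ (i, j)" by simp
  qed (auto simp: \<rho>_def)
  have r4: "(if x = \<one> then of_nat (card (carrier G)) else 0) = mat_trace (\<rho> x)" if x: "x \<in> carrier G" for x
  proof (cases "x = \<one>")
    case True
    then show ?thesis using fin' by (simp add: mat_trace_def \<rho>_def m_def)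
  next
    case False
    have "mat_trace (\<rho> x) = (\<Sum>i<m. 0)" unfolding mat_trace_def
      by (rule sum.cong) (use x False fin' in \<open>auto simp: \<rho>_def\<close>)
    then show ?thesis using False by simp
  qed
  show ?thesis unfolding ordinary_character_def
    using r1 r2 r3 r4 by blast
qed

lemma zeta_pow: "n > 0 \<Longrightarrow> zeta n ^ n = 1"
proof -
  assume n: "n > 0"
  have "zeta n ^ n = exp (of_nat n * (2 * pi * \<i> / of_nat n))"
    unfolding zeta_def by (rule exp_of_nat_mult[symmetric])
  also have "of_nat n * (2 * pi * \<i> / of_nat n) = 2 * of_real pi * \<i>" using n by simp
  finally show ?thesis by simp
qed

lemma cyc_trace_one: "cyc_trace 1 1 (of_nat N) = of_nat N"
proof -
  define f where "f = (SOME f :: rat poly. poly (map_poly of_rat f) (1::complex) = of_nat N)"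
  have ex: "\<exists>f :: rat poly. poly (map_poly of_rat f) (1::complex) = of_nat N"
    by (rule exI[of _ "[:of_nat N:]"]) (simp add: map_poly_pCons)
  have fp: "poly (map_poly of_rat f) (1::complex) = of_nat N"
    unfolding f_def by (rule someI_ex[OF ex])
  have "{k::nat. k < 1 \<and> coprime k 1} = {0}" by auto
  then show ?thesis unfolding cyc_trace_def Let_def f_def[symmetric] using fp by simp
qed

lemma sum_classes_diff:
  "sum_classes G (\<lambda>x. (a x :: complex) - b x) = sum_classes G a - sum_classes G b"
  unfolding sum_classes_def by (simp add: sum_subtractf)

theorem proposition3p3:
  fixes G :: "('a, 'b) monoid_scheme" and n :: nat
    and F :: "nat \<Rightarrow> ('k, 'c) ring_scheme" and lft :: "nat \<Rightarrow> 'k \<Rightarrow> complex"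
  assumes "group G" and "finite (carrier G)" and "n > 0"
    and "\<And>p. Factorial_Ring.prime p \<Longrightarrow> modular_system p (F p) (lft p)"
    and "VPA n G F lft \<noteq> {}"
  shows "\<forall>p::nat. Factorial_Ring.prime p \<and> p dvd n \<longrightarrow> p dvd card (carrier G)"
proof -
  interpret group G by (rule assms(1))
  obtain \<epsilon> where e: "\<epsilon> \<in> VPA n G F lft" using assms(5) by blast
  define m where "m = card (carrier G)"
  define \<chi>r :: "'a \<Rightarrow> complex" where "\<chi>r x = (if x = \<one>\<^bsub>G\<^esub> then of_nat m else 0)" for x
  define \<chi>0 :: "'a \<Rightarrow> complex" where "\<chi>0 x = 0" for x
  have ocr: "ordinary_character G \<chi>r"
    unfolding \<chi>r_def m_def by (rule regular_character[OF assms(1,2)])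
  have oc0: "ordinary_character G \<chi>0"
    unfolding \<chi>0_def by (rule zero_character)
  define T where "T \<chi> x = (\<Sum>d | d dvd n. of_int (\<epsilon> d x) * cyc_trace (n div d) (zeta n ^ d)
                                    (\<chi> x * zeta n powi (- (0 * int d))))" for \<chi> :: "'a \<Rightarrow> complex" and x
  have V1: "\<And>d. d dvd n \<Longrightarrow> sum_classes G (\<epsilon> d) = 1"
    and V2: "\<And>d. d dvd n \<Longrightarrow> d \<noteq> n \<Longrightarrow> \<epsilon> d \<one>\<^bsub>G\<^esub> = 0"
    and V3: "\<And>d x. d dvd n \<Longrightarrow> x\<in>carrier G \<Longrightarrow> \<not> group.ord G x dvd (n div d) \<Longrightarrow> \<epsilon> d x = 0"
    using e unfolding VPA_def by auto
  have V4: "\<And>\<chi>. ordinary_character G \<chi> \<Longrightarrow> \<exists>k::nat. (1 / of_nat n) * sum_classes G (T \<chi>) = of_nat k"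
  proof -
    fix \<chi> assume "ordinary_character G \<chi>"
    then have A: "\<forall>l::int. \<exists>k::nat.
           (1 / of_nat n) * sum_classes G (\<lambda>x. \<Sum>d | d dvd n.
               of_int (\<epsilon> d x) * cyc_trace (n div d) (zeta n ^ d)
                                    (\<chi> x * zeta n powi (- (l * int d))))
           = of_nat k" using e unfolding VPA_def by blast
    show "\<exists>k::nat. (1 / of_nat n) * sum_classes G (T \<chi>) = of_nat k"
      unfolding T_def by (rule spec[OF A, of 0])
  qed
  obtain k1 where k1: "(1 / of_nat n) * sum_classes G (T \<chi>r) = of_nat k1" using V4[OF ocr] by blast
  obtain k0 where k0: "(1 / of_nat n) * sum_classes G (T \<chi>0) = of_nat k0" using V4[OF oc0] by blast
  have en1: "\<epsilon> n \<one>\<^bsub>G\<^esub> = 1"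
  proof -
    have "sum_classes G (\<epsilon> n) = \<epsilon> n \<one>\<^bsub>G\<^esub>"
    proof (rule sum_classes_single[OF assms(1,2)])
      fix x assume x: "x \<in> carrier G" "x \<noteq> \<one>\<^bsub>G\<^esub>"
      then have "\<not> group.ord G x dvd (n div n)" using ord_eq_1[OF x(1)] assms(3) by simp
      then show "\<epsilon> n x = 0" using V3[of n x] x by simp
    qed
    then show ?thesis using V1[of n] by simp
  qed
  have diff: "sum_classes G (\<lambda>x. T \<chi>r x - T \<chi>0 x) = T \<chi>r \<one>\<^bsub>G\<^esub> - T \<chi>0 \<one>\<^bsub>G\<^esub>"
    by (rule sum_classes_single[OF assms(1,2)]) (simp only: T_def \<chi>r_def \<chi>0_def if_False diff_self)
  have fin: "finite {d. d dvd n}" using assms(3) by simp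
  have nin: "n \<in> {d. d dvd n}" by simp
  have "T \<chi>r \<one>\<^bsub>G\<^esub> - T \<chi>0 \<one>\<^bsub>G\<^esub> = (\<Sum>d | d dvd n. of_int (\<epsilon> d \<one>\<^bsub>G\<^esub>) *
      (cyc_trace (n div d) (zeta n ^ d) (of_nat m) - cyc_trace (n div d) (zeta n ^ d) (of_nat 0)))"
  proof -
    have a: "T \<chi>r \<one>\<^bsub>G\<^esub> = (\<Sum>d | d dvd n. of_int (\<epsilon> d \<one>\<^bsub>G\<^esub>) * cyc_trace (n div d) (zeta n ^ d) (of_nat m))"
      by (simp add: T_def \<chi>r_def)
    have b: "T \<chi>0 \<one>\<^bsub>G\<^esub> = (\<Sum>d | d dvd n. of_int (\<epsilon> d \<one>\<^bsub>G\<^esub>) * cyc_trace (n div d) (zeta n ^ d) (of_nat 0))"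
      by (simp add: T_def \<chi>0_def)
    show ?thesis unfolding a b by (simp add: sum_subtractf[symmetric] right_diff_distrib)
  qed
  also have "\<dots> = of_int (\<epsilon> n \<one>\<^bsub>G\<^esub>) *
      (cyc_trace (n div n) (zeta n ^ n) (of_nat m) - cyc_trace (n div n) (zeta n ^ n) (of_nat 0))
      + (\<Sum>d \<in> {d. d dvd n} - {n}. of_int (\<epsilon> d \<one>\<^bsub>G\<^esub>) *
      (cyc_trace (n div d) (zeta n ^ d) (of_nat m) - cyc_trace (n div d) (zeta n ^ d) (of_nat 0)))"
    by (rule sum.remove[OF fin nin])
  also have "\<dots> = of_nat m"
    using en1 V2 assms(3) zeta_pow[OF assms(3)] cyc_trace_one[of m] cyc_trace_one[of 0] by simp
  finally have dm: "T \<chi>r \<one>\<^bsub>G\<^esub> - T \<chi>0 \<one>\<^bsub>G\<^esub> = of_nat m" .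
  have "sum_classes G (T \<chi>r) = of_nat n * of_nat k1" using k1 assms(3) by (simp add: field_simps)
  moreover have "sum_classes G (T \<chi>0) = of_nat n * of_nat k0" using k0 assms(3) by (simp add: field_simps)
  ultimately have "(of_nat m :: complex) = of_nat n * of_nat k1 - of_nat n * of_nat k0"
    using diff dm sum_classes_diff[of G "T \<chi>r" "T \<chi>0"] by simp
  then have "(of_int (int m) :: complex) = of_int (int n * (int k1 - int k0))"
    by (simp add: algebra_simps)
  then have "int m = int n * (int k1 - int k0)" using of_int_eq_iff by blast
  then have "int n dvd int m" by simp
  then have "n dvd m" by simp
  then show ?thesis unfolding m_def using dvd_trans by blast
qed

end
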